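(* For every base $\mathscr{B}$ and every IPL formula $\theta$: $\Vdash^{*}_{\mathscr{B}}\theta$ if and only if $\Vdash_{\mathscr{B}}\theta$.
   Context: Fix a denumerable set $\mathbb{A}$ of atoms. IPL formulas are built from atoms and $\bot$ using $\wedge,\vee,\to$. An atomic rule has the form $(Q_1\triangleright q_1,\dots,Q_n\triangleright q_n)\Rightarrow q$ with $n\ge 0$, $q,q_i\in\mathbb{A}$ and $Q_i$ finite (possibly empty) sets of atoms. A base is a set of atomic rules. Derivability $\vdash_{\mathscr{B}}$ is the least relation such that $S\cup\{q\}\vdash_{\mathscr{B}} q$, and if $(Q_1\triangleright q_1,\dots,Q_n\triangleright q_n)\Rightarrow q\in\mathscr{B}$ and $S\cup Q_i\vdash_{\mathscr{B}} q_i$ for all $i$, then $S\vdash_{\mathscr{B}} q$. Sandqvist's support $\Vdash_{\mathscr{B}}$ is defined inductively by: (At) $\Vdash_{\mathscr{B}} p$ iff $\emptyset\vdash_{\mathscr{B}} p$; ($\to$) $\Vdash_{\mathscr{B}}\varphi\to\psi$ iff $\varphi\Vdash_{\mathscr{B}}\psi$; ($\wedge$) $\Vdash_{\mathscr{B}}\varphi\wedge\psi$ iff $\Vdash_{\mathscr{B}}\varphi$ and $\Vdash_{\mathscr{B}}\psi$; ($\vee$) $\Vdash_{\mathscr{B}}\varphi\vee\psi$ iff for every $\mathscr{C}\supseteq\mathscr{B}$ and atom $p$, if $\varphi\Vdash_{\mathscr{C}}p$ and $\psi\Vdash_{\mathscr{C}}p$ then $\Vdash_{\mathscr{C}}p$;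 ($\bot$) $\Vdash_{\mathscr{B}}\bot$ iff $\Vdash_{\mathscr{B}}p$ for all atoms $p$; (Inf) for nonempty finite $\Gamma$, $\Gamma\Vdash_{\mathscr{B}}\varphi$ iff for every $\mathscr{C}\supseteq\mathscr{B}$, if $\Vdash_{\mathscr{C}}\psi$ for all $\psi\in\Gamma$ then $\Vdash_{\mathscr{C}}\varphi$. The relation $\Vdash^{*}_{\mathscr{B}}$ is defined by the same clauses except that ($\wedge$) is replaced by ($\wedge^*$): $\Vdash^{*}_{\mathscr{B}}\varphi\wedge\psi$ iff for every $\mathscr{C}\supseteq\mathscr{B}$ and every atom $p$, if $\varphi,\psi\Vdash^{*}_{\mathscr{C}}p$ then $\Vdash^{*}_{\mathscr{C}}p$. *)

theory Defs
  imports Main "HOL-Library.FSet"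
begin

type_synonym atom = nat

datatype form = Atom atom | Bot | Conj form form | Disj form form | Imp form form

text \<open>An atomic rule (Q_1 |> q_1, ..., Q_n |> q_n) => q is represented as the pair
  ([(Q_1,q_1),...,(Q_n,q_n)], q), with each Q_i a finite set of atoms.\<close>
type_synonym rule = "(atom fset \<times> atom) list \<times> atom"
type_synonym base = "rule set"

inductive derives :: "base \<Rightarrow> atom set \<Rightarrow> atom \<Rightarrow> bool" where
  ax: "q \<in> S \<Longrightarrow> derives B S q"
| app: "(prems, q) \<in> B \<Longrightarrow> (\<forall>(Q, qi) \<in> set prems. derives B (S \<union> fset Q) qi)
        \<Longrightarrow> derives B S q"

text \<open>Sandqvist's support: supp phi B means  |-_B phi.  For a single premise,
  (Inf) reads: phi |-_B psi iff for all C \<supseteq> B, supp phi C implies supp psi C.\<close>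
primrec supp :: "form \<Rightarrow> base \<Rightarrow> bool" where
  "supp (Atom p) B = derives B {} p"
| "supp Bot B = (\<forall>p. derives B {} p)"
| "supp (Conj a b) B = (supp a B \<and> supp b B)"
| "supp (Disj a b) B =
     (\<forall>C p. B \<subseteq> C \<longrightarrow>
        (\<forall>D. C \<subseteq> D \<longrightarrow> supp a D \<longrightarrow> derives D {} p) \<longrightarrow>
        (\<forall>D. C \<subseteq> D \<longrightarrow> supp b D \<longrightarrow> derives D {} p) \<longrightarrow>
        derives C {} p)"
| "supp (Imp a b) B = (\<forall>C. B \<subseteq> C \<longrightarrow> supp a C \<longrightarrow> supp b C)"

text \<open>The variant with the clause (and*): phi,psi |-*_C p is the (Inf) clause with
  Gamma = {phi, psi}.\<close>
primrec supp_star :: "form \<Rightarrow> base \<Rightarrow> bool" where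
  "supp_star (Atom p) B = derives B {} p"
| "supp_star Bot B = (\<forall>p. derives B {} p)"
| "supp_star (Conj a b) B =
     (\<forall>C p. B \<subseteq> C \<longrightarrow>
        (\<forall>D. C \<subseteq> D \<longrightarrow> supp_star a D \<longrightarrow> supp_star b D \<longrightarrow> derives D {} p) \<longrightarrow>
        derives C {} p)"
| "supp_star (Disj a b) B =
     (\<forall>C p. B \<subseteq> C \<longrightarrow>
        (\<forall>D. C \<subseteq> D \<longrightarrow> supp_star a D \<longrightarrow> derives D {} p) \<longrightarrow>
        (\<forall>D. C \<subseteq> D \<longrightarrow> supp_star b D \<longrightarrow> derives D {} p) \<longrightarrow>
        derives C {} p)"
| "supp_star (Imp a b) B = (\<forall>C. B \<subseteq> C \<longrightarrow> supp_star a C \<longrightarrow> supp_star b C)"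

end

theory Submission
  imports Defs
begin

lemma derives_mono: "derives B S p \<Longrightarrow> B \<subseteq> C \<Longrightarrow> derives C S p"
proof (induction rule: derives.induct)
  case (ax q S B) then show ?case by (blast intro: derives.ax)
next
  case (app prems q B S) then show ?case by (fastforce intro: derives.app)
qed

lemma supp_mono: "supp \<phi> B \<Longrightarrow> B \<subseteq> C \<Longrightarrow> supp \<phi> C"
proof (induction \<phi> arbitrary: B C)
  case (Atom x) then show ?case by (auto intro: derives_mono)
next
  case Bot then show ?case by (auto intro: derives_mono)
next
  case (Conj a b) then show ?case by auto
next
  case (Disj a b)
  show ?case unfolding supp.simps
  proof (intro allI impI)
    fix D p assume "C \<subseteq> D" "\<forall>E. D \<subseteq> E \<longrightarrow> supp a E \<longrightarrow> derives E {} p"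
      "\<forall>E. D \<subseteq> E \<longrightarrow> supp b E \<longrightarrow> derives E {} p"
    moreover have "B \<subseteq> D" using Disj.prems(2) \<open>C \<subseteq> D\<close> by (rule order_trans)
    ultimately show "derives D {} p" using Disj.prems(1) unfolding supp.simps by blast
  qed
next
  case (Imp a b)
  show ?case unfolding supp.simps
  proof (intro allI impI)
    fix D assume "C \<subseteq> D" "supp a D"
    moreover have "B \<subseteq> D" using Imp.prems(2) \<open>C \<subseteq> D\<close> by (rule order_trans)
    ultimately show "supp b D" using Imp.prems(1) unfolding supp.simps by blast
  qed
qed

lemma K_supp:
  "(\<forall>C p. B \<subseteq> C \<longrightarrow> (\<forall>D. C \<subseteq> D \<longrightarrow> supp \<phi> D \<longrightarrow> derives D {} p) \<longrightarrow> derives C {} p)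
   \<Longrightarrow> supp \<phi> B"
proof (induction \<phi> arbitrary: B)
  case (Atom x) then show ?case by auto
next
  case Bot then show ?case by auto
next
  case (Conj a b)
  have "supp a B"
  proof (rule Conj.IH(1), intro allI impI)
    fix C p assume "B \<subseteq> C" "\<forall>D. C \<subseteq> D \<longrightarrow> supp a D \<longrightarrow> derives D {} p"
    then show "derives C {} p" using Conj.prems[rule_format, of C p] by simp
  qed
  moreover have "supp b B"
  proof (rule Conj.IH(2), intro allI impI)
    fix C p assume "B \<subseteq> C" "\<forall>D. C \<subseteq> D \<longrightarrow> supp b D \<longrightarrow> derives D {} p"
    then show "derives C {} p" using Conj.prems[rule_format, of C p] by simp
  qed
  ultimately show ?case by simp
next
  case (Disj a b)
  show ?case
  proof (simp, intro allI impI)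
    fix C p
    assume BC: "B \<subseteq> C" and Ha: "\<forall>D. C \<subseteq> D \<longrightarrow> supp a D \<longrightarrow> derives D {} p"
      and Hb: "\<forall>D. C \<subseteq> D \<longrightarrow> supp b D \<longrightarrow> derives D {} p"
    have "\<forall>D. C \<subseteq> D \<longrightarrow> supp (Disj a b) D \<longrightarrow> derives D {} p"
    proof (intro allI impI)
      fix D assume "C \<subseteq> D" "supp (Disj a b) D"
      then have sd: "\<forall>E p. D \<subseteq> E \<longrightarrow>
        (\<forall>F. E \<subseteq> F \<longrightarrow> supp a F \<longrightarrow> derives F {} p) \<longrightarrow>
        (\<forall>F. E \<subseteq> F \<longrightarrow> supp b F \<longrightarrow> derives F {} p) \<longrightarrow>
        derives E {} p" unfolding supp.simps by blast
      have "\<forall>F. D \<subseteq> F \<longrightarrow> supp a F \<longrightarrow> derives F {} p"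
        using Ha \<open>C \<subseteq> D\<close> by (blast dest: order_trans)
      moreover have "\<forall>F. D \<subseteq> F \<longrightarrow> supp b F \<longrightarrow> derives F {} p"
        using Hb \<open>C \<subseteq> D\<close> by (blast dest: order_trans)
      ultimately show "derives D {} p" using sd by blast
    qed
    then show "derives C {} p" using Disj.prems[rule_format, OF BC] by blast
  qed
next
  case (Imp a b)
  show ?case
  proof (simp, intro allI impI)
    fix C assume BC: "B \<subseteq> C" and sa: "supp a C"
    show "supp b C"
    proof (rule Imp.IH(2), intro allI impI)
      fix E p assume CE: "C \<subseteq> E" and H: "\<forall>D. E \<subseteq> D \<longrightarrow> supp b D \<longrightarrow> derives D {} p"
      have "\<forall>D. E \<subseteq> D \<longrightarrow> supp (Imp a b) D \<longrightarrow> derives D {} p"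
      proof (intro allI impI)
        fix D assume ED: "E \<subseteq> D" and si: "supp (Imp a b) D"
        have "supp a D" using sa CE ED supp_mono by blast
        then have "supp b D" using si by simp
        then show "derives D {} p" using H ED by blast
      qed
      moreover have "B \<subseteq> E" using BC CE by (rule order_trans)
      ultimately show "derives E {} p" using Imp.prems[rule_format, of E p] by blast
    qed
  qed
qed

theorem mainTheorem2:
  fixes B :: base and \<theta> :: form
  shows "supp_star \<theta> B \<longleftrightarrow> supp \<theta> B"
proof (induction \<theta> arbitrary: B)
  case (Atom x) then show ?case by simp
next
  case Bot then show ?case by simp
next
  case (Conj a b)
  have eq: "supp_star (Conj a b) B =
     (\<forall>C p. B \<subseteq> C \<longrightarrow>
        (\<forall>D. C \<subseteq> D \<longrightarrow> supp a D \<longrightarrow> supp b D \<longrightarrow> derives D {} p) \<longrightarrow>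
        derives C {} p)" using Conj.IH by simp
  show ?case
  proof
    assume "supp_star (Conj a b) B"
    then have K: "\<forall>C p. B \<subseteq> C \<longrightarrow>
        (\<forall>D. C \<subseteq> D \<longrightarrow> supp a D \<longrightarrow> supp b D \<longrightarrow> derives D {} p) \<longrightarrow>
        derives C {} p" using eq by simp
    have "supp a B"
    proof (rule K_supp, intro allI impI)
      fix C p assume "B \<subseteq> C" "\<forall>D. C \<subseteq> D \<longrightarrow> supp a D \<longrightarrow> derives D {} p"
      then show "derives C {} p" using K[rule_format, of C p] by simp
    qed
    moreover have "supp b B"
    proof (rule K_supp, intro allI impI)
      fix C p assume "B \<subseteq> C" "\<forall>D. C \<subseteq> D \<longrightarrow> supp b D \<longrightarrow> derives D {} p"
      then show "derives C {} p" using K[rule_format, of C p] by simp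
    qed
    ultimately show "supp (Conj a b) B" by simp
  next
    assume "supp (Conj a b) B"
    then show "supp_star (Conj a b) B" unfolding eq
      by (meson order_refl supp.simps(3) supp_mono)
  qed
next
  case (Disj a b) then show ?case by simp
next
  case (Imp a b) then show ?case by simp
qed

end
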